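(* Let $K$ be a skew field with center $P$ and an involution, $\mathcal C$ a linear category over $P$ with involution, and $A$ a selfadjoint, direct-sum-indecomposable representation of $\mathcal C$ over $K$. Then $A$ is congruent to a representation $B^f$, where $B\in\operatorname{ind}_0(\mathcal C)$ and $f=f^\circ\in\operatorname{Aut}(B)$.
   Context: $K$ has an involution $a\mapsto\bar a$. Linear category over $P$: $P$-vector-space Hom sets, bilinear composition; involution on it: $u\mapsto u^*$, $(\alpha:u\to v)\mapsto(\alpha^*:v^*\to u^* )$, $u^{**}=u\ne u^*$, $\alpha^{**}=\alpha$, $(\alpha\beta)^*=\beta^*\alpha^*$, $(\alpha a)^*=\alpha^*\bar a$. Representations: functors to finite-dimensional right $K$-spaces, finite total dimension, preserving $P$-linear combinations; morphisms: natural transformations. $V^*$: semilinear forms, $A^*\varphi=\varphi A$, $V^{**}=V$. $A^\circ_u=(A_{u^*})^*$, $A^\circ_\alpha=(A_{\alpha^*})^*$, $f^\circ_u=(f_{u^*})^*$. Selfadjoint: $A=A^\circ$; congruence: isomorphism $\varphi$ of selfadjoint representations with $\varphi^\circ=\varphi^{-1}$. Fix a partition of objects into $S_0$, $S_0^*$. For selfadjoint $B$ and automorphism $f=f^\circ$: $\tilde f_v=f_v$, $\tilde f_{v^*}=1$ ($v\in S_0$), $B^f_v=B_v$, $B^f_\alpha=\tilde f_v^{-1}B_\alpha\tilde f_u$ for $\alpha:u\to v$. $\operatorname{ind}_0(\mathcal C)$: from a complete set of pairwise nonisomorphic indecomposable representations, take those isomorphic to a selfadjoint representation, each replaced by a selfadjoint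 representation isomorphic to it. *)

theory Defs
  imports "Jordan_Normal_Form.Matrix"
begin

definition center :: "'k::division_ring set" where
  "center = {a. \<forall>b. a * b = b * a}"

definition skew_involution :: "('k::division_ring \<Rightarrow> 'k) \<Rightarrow> bool" where
  "skew_involution cj \<longleftrightarrow>
     (\<forall>a. cj (cj a) = a) \<and> (\<forall>a b. cj (a + b) = cj a + cj b) \<and>
     (\<forall>a b. cj (a * b) = cj b * cj a)"

record ('o, 'm, 'k) lcat =
  Dom  :: "'m \<Rightarrow> 'o"
  Cod  :: "'m \<Rightarrow> 'o"
  Comp :: "'m \<Rightarrow> 'm \<Rightarrow> 'm"   (* Comp C \<beta> \<alpha> = \<beta>\<alpha> : first \<alpha>, then \<beta> *)
  Ident :: "'o \<Rightarrow> 'm"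
  Add  :: "'m \<Rightarrow> 'm \<Rightarrow> 'm"
  Zero :: "'o \<Rightarrow> 'o \<Rightarrow> 'm"
  Smul :: "'m \<Rightarrow> 'k \<Rightarrow> 'm"
  ostar :: "'o \<Rightarrow> 'o"
  mstar :: "'m \<Rightarrow> 'm"

definition hom :: "('o, 'm, 'k) lcat \<Rightarrow> 'o \<Rightarrow> 'o \<Rightarrow> 'm set" where
  "hom C u v = {\<alpha>. Dom C \<alpha> = u \<and> Cod C \<alpha> = v}"

definition lin_cat_inv :: "('k::division_ring \<Rightarrow> 'k) \<Rightarrow> ('o, 'm, 'k) lcat \<Rightarrow> bool" where
  "lin_cat_inv cj C \<longleftrightarrow>
    \<comment> \<open>category\<close>
    (\<forall>u. Ident C u \<in> hom C u u) \<and>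
    (\<forall>u v w \<alpha> \<beta>. \<alpha> \<in> hom C u v \<longrightarrow> \<beta> \<in> hom C v w \<longrightarrow> Comp C \<beta> \<alpha> \<in> hom C u w) \<and>
    (\<forall>u v w x \<alpha> \<beta> \<gamma>. \<alpha> \<in> hom C u v \<longrightarrow> \<beta> \<in> hom C v w \<longrightarrow> \<gamma> \<in> hom C w x \<longrightarrow>
        Comp C \<gamma> (Comp C \<beta> \<alpha>) = Comp C (Comp C \<gamma> \<beta>) \<alpha>) \<and>
    (\<forall>u v \<alpha>. \<alpha> \<in> hom C u v \<longrightarrow> Comp C \<alpha> (Ident C u) = \<alpha> \<and> Comp C (Ident C v) \<alpha> = \<alpha>) \<and>
    \<comment> \<open>each Hom set is a P-vector space\<close>
    (\<forall>u v. Zero C u v \<in> hom C u v) \<and>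
    (\<forall>u v \<alpha> \<beta>. \<alpha> \<in> hom C u v \<longrightarrow> \<beta> \<in> hom C u v \<longrightarrow> Add C \<alpha> \<beta> \<in> hom C u v) \<and>
    (\<forall>u v \<alpha> a. \<alpha> \<in> hom C u v \<longrightarrow> a \<in> center \<longrightarrow> Smul C \<alpha> a \<in> hom C u v) \<and>
    (\<forall>u v \<alpha> \<beta> \<gamma>. \<alpha> \<in> hom C u v \<longrightarrow> \<beta> \<in> hom C u v \<longrightarrow> \<gamma> \<in> hom C u v \<longrightarrow>
        Add C (Add C \<alpha> \<beta>) \<gamma> = Add C \<alpha> (Add C \<beta> \<gamma>)) \<and>
    (\<forall>u v \<alpha> \<beta>. \<alpha> \<in> hom C u v \<longrightarrow> \<beta> \<in> hom C u v \<longrightarrow> Add C \<alpha> \<beta> = Add C \<beta> \<alpha>) \<and>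
    (\<forall>u v \<alpha>. \<alpha> \<in> hom C u v \<longrightarrow> Add C \<alpha> (Zero C u v) = \<alpha>) \<and>
    (\<forall>u v \<alpha>. \<alpha> \<in> hom C u v \<longrightarrow> Add C \<alpha> (Smul C \<alpha> (-1)) = Zero C u v) \<and>
    (\<forall>u v \<alpha>. \<alpha> \<in> hom C u v \<longrightarrow> Smul C \<alpha> 1 = \<alpha>) \<and>
    (\<forall>u v \<alpha> a b. \<alpha> \<in> hom C u v \<longrightarrow> a \<in> center \<longrightarrow> b \<in> center \<longrightarrow>
        Smul C (Smul C \<alpha> a) b = Smul C \<alpha> (a * b)) \<and>
    (\<forall>u v \<alpha> \<beta> a. \<alpha> \<in> hom C u v \<longrightarrow> \<beta> \<in> hom C u v \<longrightarrow> a \<in> center \<longrightarrow>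
        Smul C (Add C \<alpha> \<beta>) a = Add C (Smul C \<alpha> a) (Smul C \<beta> a)) \<and>
    (\<forall>u v \<alpha> a b. \<alpha> \<in> hom C u v \<longrightarrow> a \<in> center \<longrightarrow> b \<in> center \<longrightarrow>
        Smul C \<alpha> (a + b) = Add C (Smul C \<alpha> a) (Smul C \<alpha> b)) \<and>
    \<comment> \<open>composition is bilinear\<close>
    (\<forall>u v w \<alpha> \<alpha>' \<beta>. \<alpha> \<in> hom C u v \<longrightarrow> \<alpha>' \<in> hom C u v \<longrightarrow> \<beta> \<in> hom C v w \<longrightarrow>
        Comp C \<beta> (Add C \<alpha> \<alpha>') = Add C (Comp C \<beta> \<alpha>) (Comp C \<beta> \<alpha>')) \<and>
    (\<forall>u v w \<alpha> \<beta> \<beta>'. \<alpha> \<in> hom C u v \<longrightarrow> \<beta> \<in> hom C v w \<longrightarrow> \<beta>' \<in> hom C v w \<longrightarrow>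
        Comp C (Add C \<beta> \<beta>') \<alpha> = Add C (Comp C \<beta> \<alpha>) (Comp C \<beta>' \<alpha>)) \<and>
    (\<forall>u v w \<alpha> \<beta> a. \<alpha> \<in> hom C u v \<longrightarrow> \<beta> \<in> hom C v w \<longrightarrow> a \<in> center \<longrightarrow>
        Comp C \<beta> (Smul C \<alpha> a) = Smul C (Comp C \<beta> \<alpha>) a \<and>
        Comp C (Smul C \<beta> a) \<alpha> = Smul C (Comp C \<beta> \<alpha>) a) \<and>
    \<comment> \<open>involution\<close>
    (\<forall>u. ostar C (ostar C u) = u \<and> ostar C u \<noteq> u) \<and>
    (\<forall>u v \<alpha>. \<alpha> \<in> hom C u v \<longrightarrow> mstar C \<alpha> \<in> hom C (ostar C v) (ostar C u)) \<and>
    (\<forall>\<alpha>. mstar C (mstar C \<alpha>) = \<alpha>) \<and>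
    (\<forall>u v w \<alpha> \<beta>. \<alpha> \<in> hom C u v \<longrightarrow> \<beta> \<in> hom C v w \<longrightarrow>
        mstar C (Comp C \<beta> \<alpha>) = Comp C (mstar C \<alpha>) (mstar C \<beta>)) \<and>
    (\<forall>u v \<alpha> \<beta>. \<alpha> \<in> hom C u v \<longrightarrow> \<beta> \<in> hom C u v \<longrightarrow>
        mstar C (Add C \<alpha> \<beta>) = Add C (mstar C \<alpha>) (mstar C \<beta>)) \<and>
    (\<forall>u v \<alpha> a. \<alpha> \<in> hom C u v \<longrightarrow> a \<in> center \<longrightarrow> mstar C (Smul C \<alpha> a) = Smul C (mstar C \<alpha>) (cj a))"

section \<open>Representations (in coordinates: the space at u is K^(dim u), column vectors,
  K acting on the right; linear maps are matrices acting on the left)\<close>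

record ('o, 'm, 'k) rep =
  rdim :: "'o \<Rightarrow> nat"
  rmap :: "'m \<Rightarrow> 'k mat"

definition is_rep :: "('o, 'm, 'k::division_ring) lcat \<Rightarrow> ('o, 'm, 'k) rep \<Rightarrow> bool" where
  "is_rep C A \<longleftrightarrow>
    finite {u. rdim A u \<noteq> 0} \<and>
    (\<forall>u v \<alpha>. \<alpha> \<in> hom C u v \<longrightarrow> rmap A \<alpha> \<in> carrier_mat (rdim A v) (rdim A u)) \<and>
    (\<forall>u. rmap A (Ident C u) = 1\<^sub>m (rdim A u)) \<and>
    (\<forall>u v w \<alpha> \<beta>. \<alpha> \<in> hom C u v \<longrightarrow> \<beta> \<in> hom C v w \<longrightarrow>
        rmap A (Comp C \<beta> \<alpha>) = rmap A \<beta> * rmap A \<alpha>) \<and>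
    (\<forall>u v \<alpha> \<beta>. \<alpha> \<in> hom C u v \<longrightarrow> \<beta> \<in> hom C u v \<longrightarrow>
        rmap A (Add C \<alpha> \<beta>) = rmap A \<alpha> + rmap A \<beta>) \<and>
    (\<forall>u v \<alpha> a. \<alpha> \<in> hom C u v \<longrightarrow> a \<in> center \<longrightarrow>
        rmap A (Smul C \<alpha> a) = map_mat (\<lambda>x. x * a) (rmap A \<alpha>))"

definition rep_hom :: "('o, 'm, 'k::division_ring) lcat \<Rightarrow> ('o, 'm, 'k) rep \<Rightarrow> ('o, 'm, 'k) rep
    \<Rightarrow> ('o \<Rightarrow> 'k mat) \<Rightarrow> bool" where
  "rep_hom C A B f \<longleftrightarrow>
    (\<forall>u. f u \<in> carrier_mat (rdim B u) (rdim A u)) \<and>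
    (\<forall>u v \<alpha>. \<alpha> \<in> hom C u v \<longrightarrow> rmap B \<alpha> * f u = f v * rmap A \<alpha>)"

definition rep_iso :: "('o, 'm, 'k::division_ring) lcat \<Rightarrow> ('o, 'm, 'k) rep \<Rightarrow> ('o, 'm, 'k) rep
    \<Rightarrow> ('o \<Rightarrow> 'k mat) \<Rightarrow> bool" where
  "rep_iso C A B f \<longleftrightarrow> rep_hom C A B f \<and>
    (\<forall>u. \<exists>g. g \<in> carrier_mat (rdim A u) (rdim B u) \<and>
              g * f u = 1\<^sub>m (rdim A u) \<and> f u * g = 1\<^sub>m (rdim B u))"

definition isomorphic :: "('o, 'm, 'k::division_ring) lcat \<Rightarrow> ('o, 'm, 'k) rep \<Rightarrow> ('o, 'm, 'k) rep \<Rightarrow> bool" where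
  "isomorphic C A B \<longleftrightarrow> (\<exists>f. rep_iso C A B f)"

definition Aut :: "('o, 'm, 'k::division_ring) lcat \<Rightarrow> ('o, 'm, 'k) rep \<Rightarrow> ('o \<Rightarrow> 'k mat) set" where
  "Aut C B = {f. rep_iso C B B f}"

definition dsum :: "('o, 'm, 'k::division_ring) lcat \<Rightarrow> ('o, 'm, 'k) rep \<Rightarrow> ('o, 'm, 'k) rep \<Rightarrow> ('o, 'm, 'k) rep" where
  "dsum C A B = \<lparr> rdim = (\<lambda>u. rdim A u + rdim B u),
     rmap = (\<lambda>\<alpha>. four_block_mat (rmap A \<alpha>) (0\<^sub>m (rdim A (Cod C \<alpha>)) (rdim B (Dom C \<alpha>)))
                                 (0\<^sub>m (rdim B (Cod C \<alpha>)) (rdim A (Dom C \<alpha>))) (rmap B \<alpha>)) \<rparr>"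

definition nonzero_rep :: "('o, 'm, 'k) rep \<Rightarrow> bool" where
  "nonzero_rep A \<longleftrightarrow> (\<exists>u. rdim A u \<noteq> 0)"

definition indecomposable :: "('o, 'm, 'k::division_ring) lcat \<Rightarrow> ('o, 'm, 'k) rep \<Rightarrow> bool" where
  "indecomposable C A \<longleftrightarrow> is_rep C A \<and> nonzero_rep A \<and>
     \<not> (\<exists>B1 B2. is_rep C B1 \<and> is_rep C B2 \<and> nonzero_rep B1 \<and> nonzero_rep B2 \<and>
               isomorphic C A (dsum C B1 B2))"

text \<open>In coordinates, the dual of K^n (semilinear forms) is again K^n and the adjoint
  of a matrix M is its conjugate transpose.\<close>
definition cadj :: "('k \<Rightarrow> 'k) \<Rightarrow> 'k mat \<Rightarrow> 'k mat" where
  "cadj cj M = map_mat cj (transpose_mat M)"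

definition rep_adj :: "('o, 'm, 'k) lcat \<Rightarrow> ('k \<Rightarrow> 'k) \<Rightarrow> ('o, 'm, 'k) rep \<Rightarrow> ('o, 'm, 'k) rep" where
  "rep_adj C cj A = \<lparr> rdim = (\<lambda>u. rdim A (ostar C u)),
                      rmap = (\<lambda>\<alpha>. cadj cj (rmap A (mstar C \<alpha>))) \<rparr>"

definition mor_adj :: "('o, 'm, 'k) lcat \<Rightarrow> ('k \<Rightarrow> 'k) \<Rightarrow> ('o \<Rightarrow> 'k mat) \<Rightarrow> ('o \<Rightarrow> 'k mat)" where
  "mor_adj C cj f = (\<lambda>u. cadj cj (f (ostar C u)))"

definition selfadjoint :: "('o, 'm, 'k::division_ring) lcat \<Rightarrow> ('k \<Rightarrow> 'k) \<Rightarrow> ('o, 'm, 'k) rep \<Rightarrow> bool" where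
  "selfadjoint C cj A \<longleftrightarrow> is_rep C A \<and> A = rep_adj C cj A"

definition rep_congruent :: "('o, 'm, 'k::division_ring) lcat \<Rightarrow> ('k \<Rightarrow> 'k) \<Rightarrow> ('o, 'm, 'k) rep \<Rightarrow> ('o, 'm, 'k) rep \<Rightarrow> bool" where
  "rep_congruent C cj A B \<longleftrightarrow> selfadjoint C cj A \<and> selfadjoint C cj B \<and>
     (\<exists>\<phi>. rep_iso C A B \<phi> \<and>
          (\<forall>u. mor_adj C cj \<phi> u * \<phi> u = 1\<^sub>m (rdim A u) \<and> \<phi> u * mor_adj C cj \<phi> u = 1\<^sub>m (rdim B u)))"

definition S0_partition :: "('o, 'm, 'k) lcat \<Rightarrow> 'o set \<Rightarrow> bool" where
  "S0_partition C S0 \<longleftrightarrow> (\<forall>u. u \<in> S0 \<longleftrightarrow> ostar C u \<notin> S0)"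

definition minv :: "nat \<Rightarrow> 'k::division_ring mat \<Rightarrow> 'k mat" where
  "minv n M = (SOME N. N \<in> carrier_mat n n \<and> N * M = 1\<^sub>m n \<and> M * N = 1\<^sub>m n)"

definition ftilde :: "'o set \<Rightarrow> ('o, 'm, 'k::division_ring) rep \<Rightarrow> ('o \<Rightarrow> 'k mat) \<Rightarrow> 'o \<Rightarrow> 'k mat" where
  "ftilde S0 B f v = (if v \<in> S0 then f v else 1\<^sub>m (rdim B v))"

definition twist :: "('o, 'm, 'k::division_ring) lcat \<Rightarrow> 'o set \<Rightarrow> ('o, 'm, 'k) rep \<Rightarrow> ('o \<Rightarrow> 'k mat)
    \<Rightarrow> ('o, 'm, 'k) rep" where
  "twist C S0 B f = \<lparr> rdim = rdim B,
     rmap = (\<lambda>\<alpha>. minv (rdim B (Cod C \<alpha>)) (ftilde S0 B f (Cod C \<alpha>)) * rmap B \<alpha>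
                   * ftilde S0 B f (Dom C \<alpha>)) \<rparr>"

definition complete_indec_set :: "('o, 'm, 'k::division_ring) lcat \<Rightarrow> ('o, 'm, 'k) rep set \<Rightarrow> bool" where
  "complete_indec_set C I \<longleftrightarrow>
     (\<forall>X\<in>I. indecomposable C X) \<and>
     (\<forall>X\<in>I. \<forall>Y\<in>I. X \<noteq> Y \<longrightarrow> \<not> isomorphic C X Y) \<and>
     (\<forall>Z. indecomposable C Z \<longrightarrow> (\<exists>X\<in>I. isomorphic C Z X))"

definition is_ind0 :: "('o, 'm, 'k::division_ring) lcat \<Rightarrow> ('k \<Rightarrow> 'k) \<Rightarrow> ('o, 'm, 'k) rep set
    \<Rightarrow> ('o, 'm, 'k) rep set \<Rightarrow> bool" where
  "is_ind0 C cj I J \<longleftrightarrow> complete_indec_set C I \<and>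
     (\<exists>g. J = g ` {X\<in>I. \<exists>S. selfadjoint C cj S \<and> isomorphic C X S} \<and>
          (\<forall>X\<in>I. (\<exists>S. selfadjoint C cj S \<and> isomorphic C X S) \<longrightarrow>
                  selfadjoint C cj (g X) \<and> isomorphic C X (g X)))"

end

theory Submission
  imports Defs
begin

lemma cj_props:
  assumes "skew_involution cj"
  shows "cj (cj a) = a" "cj (a + b) = cj a + cj b" "cj (a * b) = cj b * cj a" "cj 0 = 0" "cj 1 = 1"
proof -
  show 1: "cj (cj a) = a" "cj (a + b) = cj a + cj b" "cj (a * b) = cj b * cj a"
    using assms unfolding skew_involution_def by auto
  have "cj 0 = cj (0 + 0)" by simp
  also have "\<dots> = cj 0 + cj 0" using assms unfolding skew_involution_def by blast
  finally show "cj 0 = 0" by simp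
  have "cj (cj 1 * 1) = cj 1 * cj (cj 1)" using assms unfolding skew_involution_def by blast
  hence "cj (cj 1) = cj 1 * cj (cj 1)" by simp
  hence "1 = cj 1 * 1" using assms unfolding skew_involution_def by metis
  thus "cj 1 = 1" by simp
qed

lemma cj_sum:
  assumes "skew_involution cj" "finite S"
  shows "cj (sum f S) = sum (\<lambda>i. cj (f i)) S"
  using assms(2) by (induction S rule: finite_induct) (auto simp: cj_props[OF assms(1)])

lemma cadj_carrier[simp]: "M \<in> carrier_mat nr nc \<Longrightarrow> cadj cj M \<in> carrier_mat nc nr"
  unfolding cadj_def by auto

lemma cadj_dims[simp]: "dim_row (cadj cj M) = dim_col M" "dim_col (cadj cj M) = dim_row M"
  unfolding cadj_def by auto

lemma cadj_index: "i < dim_col M \<Longrightarrow> j < dim_row M \<Longrightarrow> cadj cj M $$ (i,j) = cj (M $$ (j,i))"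
  unfolding cadj_def by auto

lemma cadj_mult:
  assumes cj: "skew_involution cj" and A: "(A::'k::division_ring mat) \<in> carrier_mat n m" and B: "B \<in> carrier_mat m k"
  shows "cadj cj (A * B) = cadj cj B * cadj cj A"
proof (rule eq_matI)
  fix i j assume i: "i < dim_row (cadj cj B * cadj cj A)" and j: "j < dim_col (cadj cj B * cadj cj A)"
  have ik: "i < k" and jn: "j < n" using i j A B by auto
  have "cadj cj (A * B) $$ (i,j) = cj ((A*B) $$ (j,i))" using ik jn A B by (simp add: cadj_index)
  also have "\<dots> = cj (\<Sum>l\<in>{0..<m}. A $$ (j,l) * B $$ (l,i))"
    using ik jn A B by (simp add: scalar_prod_def)
  also have "\<dots> = (\<Sum>l\<in>{0..<m}. cj (B $$ (l,i)) * cj (A $$ (j,l)))"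
    by (simp add: cj_sum[OF cj] cj_props[OF cj])
  also have "\<dots> = (cadj cj B * cadj cj A) $$ (i,j)"
    using ik jn A B by (simp add: scalar_prod_def cadj_index)
  finally show "cadj cj (A * B) $$ (i, j) = (cadj cj B * cadj cj A) $$ (i, j)" .
qed (use A B in auto)

lemma cadj_cadj: assumes "skew_involution cj" shows "cadj cj (cadj cj M) = M"
  by (rule eq_matI) (auto simp: cadj_index cj_props[OF assms])

lemma cadj_one: assumes "skew_involution cj" shows "cadj cj (1\<^sub>m n) = (1\<^sub>m n :: 'k::division_ring mat)"
  by (rule eq_matI) (auto simp: cadj_index cj_props[OF assms])

lemma cadj_add: assumes "skew_involution cj" "M \<in> carrier_mat nr nc" "N \<in> carrier_mat nr nc"
  shows "cadj cj (M + N) = cadj cj M + cadj cj N"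
  using assms(2,3) by (intro eq_matI) (auto simp: cadj_index cj_props[OF assms(1)])

lemma mult_smul_right:
  assumes "(M::'k::division_ring mat) \<in> carrier_mat n m" "N \<in> carrier_mat m k"
  shows "M * map_mat (\<lambda>x. x * a) N = map_mat (\<lambda>x. x * a) (M * N)"
  using assms by (intro eq_matI) (auto simp: scalar_prod_def sum_distrib_right mult.assoc)

lemma mult_smul_left:
  assumes "(M::'k::division_ring mat) \<in> carrier_mat n m" "N \<in> carrier_mat m k" "a \<in> center"
  shows "map_mat (\<lambda>x. x * a) M * N = map_mat (\<lambda>x. x * a) (M * N)"
proof -
  have c: "\<And>b. a * b = b * a" using assms(3) unfolding center_def by auto
  show ?thesis
    using assms(1,2) by (intro eq_matI) (auto simp: scalar_prod_def sum_distrib_right mult.assoc c)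
qed

lemma inv_unique:
  assumes "(G::'k::division_ring mat) \<in> carrier_mat n n" "F \<in> carrier_mat n n" "H \<in> carrier_mat n n"
    "G * F = 1\<^sub>m n" "F * H = 1\<^sub>m n"
  shows "G = H"
proof -
  have "G = G * (F * H)" using assms(5) right_mult_one_mat[OF assms(1)] by simp
  also have "\<dots> = (G * F) * H" using assoc_mult_mat[OF assms(1-3)] by simp
  also have "\<dots> = H" using assms(4) left_mult_one_mat[OF assms(3)] by simp
  finally show ?thesis .
qed


lemma conj_comp:
  fixes P1 :: "'k::division_ring mat"
  assumes P1: "P1 \<in> carrier_mat r1 a1" and B: "B \<in> carrier_mat a1 a2" and Q2: "Q2 \<in> carrier_mat a2 r2"
    and P2: "P2 \<in> carrier_mat r2 a2" and Aa: "Aa \<in> carrier_mat a2 a3" and Q3: "Q3 \<in> carrier_mat a3 r3"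
    and QP: "Q2 * P2 = 1\<^sub>m a2"
  shows "(P1 * B * Q2) * (P2 * Aa * Q3) = P1 * (B * Aa) * Q3"
proof -
  have PB: "P1 * B \<in> carrier_mat r1 a2" using P1 B by simp
  have PA: "P2 * Aa \<in> carrier_mat r2 a3" using P2 Aa by simp
  have PAQ: "P2 * Aa * Q3 \<in> carrier_mat r2 r3" using PA Q3 by simp
  have "(P1 * B * Q2) * (P2 * Aa * Q3) = (P1 * B) * (Q2 * (P2 * Aa * Q3))"
    by (rule assoc_mult_mat[OF PB Q2 PAQ])
  also have "Q2 * (P2 * Aa * Q3) = (Q2 * (P2 * Aa)) * Q3"
    by (rule assoc_mult_mat[OF Q2 PA Q3, symmetric])
  also have "Q2 * (P2 * Aa) = Aa"
    using assoc_mult_mat[OF Q2 P2 Aa] QP left_mult_one_mat[OF Aa] by simp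
  also have "(P1 * B) * (Aa * Q3) = ((P1 * B) * Aa) * Q3"
    by (rule assoc_mult_mat[OF PB Aa Q3, symmetric])
  also have "(P1 * B) * Aa = P1 * (B * Aa)"
    by (rule assoc_mult_mat[OF P1 B Aa])
  finally show ?thesis .
qed

lemma lc_facts:
  assumes "lin_cat_inv cj C"
  shows "ostar C (ostar C u) = u"
    "\<alpha> \<in> hom C u v \<Longrightarrow> mstar C \<alpha> \<in> hom C (ostar C v) (ostar C u)"
    "mstar C (mstar C \<alpha>) = \<alpha>"
    "Ident C u \<in> hom C u u"
    "\<alpha> \<in> hom C u v \<Longrightarrow> \<beta> \<in> hom C v w \<Longrightarrow> Comp C \<beta> \<alpha> \<in> hom C u w"
    "\<alpha> \<in> hom C u v \<Longrightarrow> \<beta> \<in> hom C u v \<Longrightarrow> Add C \<alpha> \<beta> \<in> hom C u v"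
    "\<alpha> \<in> hom C u v \<Longrightarrow> a \<in> center \<Longrightarrow> Smul C \<alpha> a \<in> hom C u v"
proof -
  note D = assms[unfolded lin_cat_inv_def]
  have c1: "\<forall>u. Ident C u \<in> hom C u u" using D by (rule conjunct1)
  have c2: "\<forall>u v w \<alpha> \<beta>. \<alpha> \<in> hom C u v \<longrightarrow> \<beta> \<in> hom C v w \<longrightarrow> Comp C \<beta> \<alpha> \<in> hom C u w"
    using D by (elim conjE)
  have c6: "\<forall>u v \<alpha> \<beta>. \<alpha> \<in> hom C u v \<longrightarrow> \<beta> \<in> hom C u v \<longrightarrow> Add C \<alpha> \<beta> \<in> hom C u v"
    using D by (elim conjE)
  have c7: "\<forall>u v \<alpha> a. \<alpha> \<in> hom C u v \<longrightarrow> a \<in> center \<longrightarrow> Smul C \<alpha> a \<in> hom C u v"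
    using D by (elim conjE)
  have c19: "\<forall>u. ostar C (ostar C u) = u \<and> ostar C u \<noteq> u"
    using D by (elim conjE)
  have c20: "\<forall>u v \<alpha>. \<alpha> \<in> hom C u v \<longrightarrow> mstar C \<alpha> \<in> hom C (ostar C v) (ostar C u)"
    using D by (elim conjE)
  have c21: "\<forall>\<alpha>. mstar C (mstar C \<alpha>) = \<alpha>"
    using D by (elim conjE)
  show "ostar C (ostar C u) = u" using c19 by blast
  show "\<alpha> \<in> hom C u v \<Longrightarrow> mstar C \<alpha> \<in> hom C (ostar C v) (ostar C u)" using c20 by blast
  show "mstar C (mstar C \<alpha>) = \<alpha>" using c21 by blast
  show "Ident C u \<in> hom C u u" using c1 by blast
  show "\<alpha> \<in> hom C u v \<Longrightarrow> \<beta> \<in> hom C v w \<Longrightarrow> Comp C \<beta> \<alpha> \<in> hom C u w" using c2 by blast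
  show "\<alpha> \<in> hom C u v \<Longrightarrow> \<beta> \<in> hom C u v \<Longrightarrow> Add C \<alpha> \<beta> \<in> hom C u v" using c6 by blast
  show "\<alpha> \<in> hom C u v \<Longrightarrow> a \<in> center \<Longrightarrow> Smul C \<alpha> a \<in> hom C u v" using c7 by blast
qed

lemma in_hom: "\<alpha> \<in> hom C (Dom C \<alpha>) (Cod C \<alpha>)" unfolding hom_def by simp

lemma rep_facts:
  assumes "is_rep C A"
  shows "finite {u. rdim A u \<noteq> 0}"
    "\<alpha> \<in> hom C u v \<Longrightarrow> rmap A \<alpha> \<in> carrier_mat (rdim A v) (rdim A u)"
    "rmap A (Ident C u) = 1\<^sub>m (rdim A u)"
    "\<alpha> \<in> hom C u v \<Longrightarrow> \<beta> \<in> hom C v w \<Longrightarrow> rmap A (Comp C \<beta> \<alpha>) = rmap A \<beta> * rmap A \<alpha>"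
    "\<alpha> \<in> hom C u v \<Longrightarrow> \<beta> \<in> hom C u v \<Longrightarrow> rmap A (Add C \<alpha> \<beta>) = rmap A \<alpha> + rmap A \<beta>"
    "\<alpha> \<in> hom C u v \<Longrightarrow> a \<in> center \<Longrightarrow> rmap A (Smul C \<alpha> a) = map_mat (\<lambda>x. x * a) (rmap A \<alpha>)"
  using assms unfolding is_rep_def apply - by (elim conjE, blast)+

lemma conj_rep:
  fixes A R :: "('o, 'm, 'k::division_ring) rep" and C :: "('o, 'm, 'k) lcat"
  assumes lc: "lin_cat_inv cj C" and A: "is_rep C A"
    and fin: "finite {u. rdim R u \<noteq> 0}"
    and P: "\<And>u. P u \<in> carrier_mat (rdim R u) (rdim A u)"
    and Q: "\<And>u. Q u \<in> carrier_mat (rdim A u) (rdim R u)"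
    and QP: "\<And>u. Q u * P u = 1\<^sub>m (rdim A u)"
    and PQ: "\<And>u. P u * Q u = 1\<^sub>m (rdim R u)"
    and R: "\<And>u v \<alpha>. \<alpha> \<in> hom C u v \<Longrightarrow> rmap R \<alpha> = P v * rmap A \<alpha> * Q u"
  shows "is_rep C R"
  unfolding is_rep_def
proof (intro conjI allI impI)
  show "finite {u. rdim R u \<noteq> 0}" by fact
  fix u v \<alpha> assume a: "\<alpha> \<in> hom C u v"
  have ca: "rmap A \<alpha> \<in> carrier_mat (rdim A v) (rdim A u)" using rep_facts(2)[OF A a] .
  show "rmap R \<alpha> \<in> carrier_mat (rdim R v) (rdim R u)"
    unfolding R[OF a] using mult_carrier_mat[OF mult_carrier_mat[OF P ca] Q] .
next
  fix u
  have "rmap R (Ident C u) = P u * 1\<^sub>m (rdim A u) * Q u"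
    using R[OF lc_facts(4)[OF lc]] rep_facts(3)[OF A] by simp
  also have "P u * 1\<^sub>m (rdim A u) = P u" using right_mult_one_mat[OF P] .
  finally show "rmap R (Ident C u) = 1\<^sub>m (rdim R u)" using PQ by simp
next
  fix u v w \<alpha> \<beta> assume a: "\<alpha> \<in> hom C u v" and b: "\<beta> \<in> hom C v w"
  have ca: "rmap A \<alpha> \<in> carrier_mat (rdim A v) (rdim A u)" using rep_facts(2)[OF A a] .
  have cb: "rmap A \<beta> \<in> carrier_mat (rdim A w) (rdim A v)" using rep_facts(2)[OF A b] .
  have "rmap R (Comp C \<beta> \<alpha>) = P w * (rmap A \<beta> * rmap A \<alpha>) * Q u"
    using R[OF lc_facts(5)[OF lc a b]] rep_facts(4)[OF A a b] by simp
  also have "\<dots> = (P w * rmap A \<beta> * Q v) * (P v * rmap A \<alpha> * Q u)"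
    using conj_comp[OF P cb Q P ca Q QP] by simp
  also have "\<dots> = rmap R \<beta> * rmap R \<alpha>" using R a b by simp
  finally show "rmap R (Comp C \<beta> \<alpha>) = rmap R \<beta> * rmap R \<alpha>" .
next
  fix u v \<alpha> \<beta> assume a: "\<alpha> \<in> hom C u v" and b: "\<beta> \<in> hom C u v"
  have ca: "rmap A \<alpha> \<in> carrier_mat (rdim A v) (rdim A u)" using rep_facts(2)[OF A a] .
  have cb: "rmap A \<beta> \<in> carrier_mat (rdim A v) (rdim A u)" using rep_facts(2)[OF A b] .
  have "rmap R (Add C \<alpha> \<beta>) = P v * (rmap A \<alpha> + rmap A \<beta>) * Q u"
    using R[OF lc_facts(6)[OF lc a b]] rep_facts(5)[OF A a b] by simp
  also have "P v * (rmap A \<alpha> + rmap A \<beta>) = P v * rmap A \<alpha> + P v * rmap A \<beta>"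
    by (rule mult_add_distrib_mat[OF P ca cb])
  also have "(P v * rmap A \<alpha> + P v * rmap A \<beta>) * Q u = P v * rmap A \<alpha> * Q u + P v * rmap A \<beta> * Q u"
    by (rule add_mult_distrib_mat[OF mult_carrier_mat[OF P ca] mult_carrier_mat[OF P cb] Q])
  finally show "rmap R (Add C \<alpha> \<beta>) = rmap R \<alpha> + rmap R \<beta>" using R a b by simp
next
  fix u v \<alpha> and a :: 'k assume a: "\<alpha> \<in> hom C u v" and c: "a \<in> center"
  have ca: "rmap A \<alpha> \<in> carrier_mat (rdim A v) (rdim A u)" using rep_facts(2)[OF A a] .
  have "rmap R (Smul C \<alpha> a) = P v * map_mat (\<lambda>x. x * a) (rmap A \<alpha>) * Q u"
    using R[OF lc_facts(7)[OF lc a c]] rep_facts(6)[OF A a c] by simp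
  also have "P v * map_mat (\<lambda>x. x * a) (rmap A \<alpha>) = map_mat (\<lambda>x. x * a) (P v * rmap A \<alpha>)"
    by (rule mult_smul_right[OF P ca])
  also have "map_mat (\<lambda>x. x * a) (P v * rmap A \<alpha>) * Q u = map_mat (\<lambda>x. x * a) (P v * rmap A \<alpha> * Q u)"
    by (rule mult_smul_left[OF mult_carrier_mat[OF P ca] Q c])
  finally show "rmap R (Smul C \<alpha> a) = map_mat (\<lambda>x. x * a) (rmap R \<alpha>)" using R a by simp
qed


lemma nat_inv:
  fixes Xa :: "'k::division_ring mat"
  assumes Xa: "Xa \<in> carrier_mat xv xu" and Aa: "Aa \<in> carrier_mat av au"
    and hu: "hu \<in> carrier_mat xu au" and hu': "hu' \<in> carrier_mat au xu"
    and hv: "hv \<in> carrier_mat xv av" and hv': "hv' \<in> carrier_mat av xv"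
    and i1: "hu * hu' = 1\<^sub>m xu" and i2: "hv' * hv = 1\<^sub>m av" and n: "Xa * hu = hv * Aa"
  shows "Aa * hu' = hv' * Xa"
proof -
  have "hv' * Xa = hv' * Xa * (hu * hu')" using i1 right_mult_one_mat[OF mult_carrier_mat[OF hv' Xa]] by simp
  also have "\<dots> = (hv' * (Xa * hu)) * hu'"
    using assoc_mult_mat[OF mult_carrier_mat[OF hv' Xa] hu hu'] assoc_mult_mat[OF hv' Xa hu] by simp
  also have "\<dots> = ((hv' * hv) * Aa) * hu'" using n assoc_mult_mat[OF hv' hv Aa] by simp
  also have "\<dots> = Aa * hu'" using i2 left_mult_one_mat[OF Aa] by simp
  finally show ?thesis by simp
qed

lemma nat_solve:
  fixes Xa :: "'k::division_ring mat"
  assumes Xa: "Xa \<in> carrier_mat xv xu" and Aa: "Aa \<in> carrier_mat av au"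
    and hu: "hu \<in> carrier_mat xu au" and hu': "hu' \<in> carrier_mat au xu"
    and hv: "hv \<in> carrier_mat xv av"
    and i1: "hu * hu' = 1\<^sub>m xu" and n: "Xa * hu = hv * Aa"
  shows "Xa = hv * Aa * hu'"
proof -
  have "Xa = Xa * (hu * hu')" using i1 right_mult_one_mat[OF Xa] by simp
  also have "\<dots> = (Xa * hu) * hu'" using assoc_mult_mat[OF Xa hu hu'] by simp
  finally show ?thesis using n by simp
qed

lemma nat_comp:
  fixes Ba :: "'k::division_ring mat"
  assumes Ba: "Ba \<in> carrier_mat bv bu" and ku: "ku \<in> carrier_mat bu xu" and hu: "hu \<in> carrier_mat xu au"
    and Xa: "Xa \<in> carrier_mat xv xu" and kv: "kv \<in> carrier_mat bv xv" and hv: "hv \<in> carrier_mat xv av"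
    and Aa: "Aa \<in> carrier_mat av au"
    and n1: "Ba * ku = kv * Xa" and n2: "Xa * hu = hv * Aa"
  shows "Ba * (ku * hu) = (kv * hv) * Aa"
proof -
  have "Ba * (ku * hu) = (Ba * ku) * hu" using assoc_mult_mat[OF Ba ku hu] by simp
  also have "\<dots> = kv * (Xa * hu)" using n1 assoc_mult_mat[OF kv Xa hu] by simp
  also have "\<dots> = (kv * hv) * Aa" using n2 assoc_mult_mat[OF kv hv Aa] by simp
  finally show ?thesis .
qed

lemma inv_comp:
  fixes h :: "'k::division_ring mat"
  assumes h': "h' \<in> carrier_mat a x" and k': "k' \<in> carrier_mat x b" and k: "k \<in> carrier_mat b x"
    and h: "h \<in> carrier_mat x a" and i1: "k' * k = 1\<^sub>m x" and i2: "h' * h = 1\<^sub>m a"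
  shows "(h' * k') * (k * h) = 1\<^sub>m a"
proof -
  have "(h' * k') * (k * h) = h' * (k' * (k * h))" using assoc_mult_mat[OF h' k' mult_carrier_mat[OF k h]] .
  also have "k' * (k * h) = h" using assoc_mult_mat[OF k' k h] i1 left_mult_one_mat[OF h] by simp
  finally show ?thesis using i2 by simp
qed

lemma iso_inv_fam:
  assumes "rep_iso C A X h"
  obtains h' where "\<And>u. h' u \<in> carrier_mat (rdim A u) (rdim X u)"
    "\<And>u. h' u * h u = 1\<^sub>m (rdim A u)" "\<And>u. h u * h' u = 1\<^sub>m (rdim X u)"
proof -
  have "\<forall>u. \<exists>g. g \<in> carrier_mat (rdim A u) (rdim X u) \<and> g * h u = 1\<^sub>m (rdim A u) \<and> h u * g = 1\<^sub>m (rdim X u)"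
    using assms unfolding rep_iso_def by blast
  then obtain h' where "\<forall>u. h' u \<in> carrier_mat (rdim A u) (rdim X u) \<and> h' u * h u = 1\<^sub>m (rdim A u) \<and> h u * h' u = 1\<^sub>m (rdim X u)"
    by metis
  thus ?thesis using that by blast
qed

lemma iso_sym:
  assumes A: "is_rep C A" and X: "is_rep C X" and iso: "rep_iso C A X h"
  shows "isomorphic C X A"
proof -
  obtain h' where c': "\<And>u. h' u \<in> carrier_mat (rdim A u) (rdim X u)"
    and i1: "\<And>u. h' u * h u = 1\<^sub>m (rdim A u)" and i2: "\<And>u. h u * h' u = 1\<^sub>m (rdim X u)"
    using iso_inv_fam[OF iso] by blast
  have c: "\<And>u. h u \<in> carrier_mat (rdim X u) (rdim A u)" and n: "\<And>u v \<alpha>. \<alpha> \<in> hom C u v \<Longrightarrow> rmap X \<alpha> * h u = h v * rmap A \<alpha>"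
    using iso unfolding rep_iso_def rep_hom_def by auto
  have "rep_iso C X A h'"
    unfolding rep_iso_def rep_hom_def
  proof (intro conjI allI impI)
    fix u v \<alpha> assume a: "\<alpha> \<in> hom C u v"
    show "rmap A \<alpha> * h' u = h' v * rmap X \<alpha>"
      by (rule nat_inv[OF rep_facts(2)[OF X a] rep_facts(2)[OF A a] c c' c c' i2 i1 n[OF a]])
  next
    fix u show "h' u \<in> carrier_mat (rdim A u) (rdim X u)" by (rule c')
    show "\<exists>g. g \<in> carrier_mat (rdim X u) (rdim A u) \<and> g * h' u = 1\<^sub>m (rdim X u) \<and> h' u * g = 1\<^sub>m (rdim A u)"
      using c i1 i2 by blast
  qed
  thus ?thesis unfolding isomorphic_def by blast
qed

lemma iso_trans:
  assumes A: "is_rep C A" and X: "is_rep C X" and B: "is_rep C B"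
    and iso1: "rep_iso C A X h" and iso2: "rep_iso C X B k"
  shows "rep_iso C A B (\<lambda>u. k u * h u)"
proof -
  obtain h' where hc': "\<And>u. h' u \<in> carrier_mat (rdim A u) (rdim X u)"
    and hi1: "\<And>u. h' u * h u = 1\<^sub>m (rdim A u)" and hi2: "\<And>u. h u * h' u = 1\<^sub>m (rdim X u)"
    using iso_inv_fam[OF iso1] by blast
  obtain k' where kc': "\<And>u. k' u \<in> carrier_mat (rdim X u) (rdim B u)"
    and ki1: "\<And>u. k' u * k u = 1\<^sub>m (rdim X u)" and ki2: "\<And>u. k u * k' u = 1\<^sub>m (rdim B u)"
    using iso_inv_fam[OF iso2] by blast
  have hc: "\<And>u. h u \<in> carrier_mat (rdim X u) (rdim A u)" and hn: "\<And>u v \<alpha>. \<alpha> \<in> hom C u v \<Longrightarrow> rmap X \<alpha> * h u = h v * rmap A \<alpha>"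
    using iso1 unfolding rep_iso_def rep_hom_def by auto
  have kc: "\<And>u. k u \<in> carrier_mat (rdim B u) (rdim X u)" and kn: "\<And>u v \<alpha>. \<alpha> \<in> hom C u v \<Longrightarrow> rmap B \<alpha> * k u = k v * rmap X \<alpha>"
    using iso2 unfolding rep_iso_def rep_hom_def by auto
  show ?thesis
    unfolding rep_iso_def rep_hom_def
  proof (intro conjI allI impI)
    fix u v \<alpha> assume a: "\<alpha> \<in> hom C u v"
    show "rmap B \<alpha> * (k u * h u) = k v * h v * rmap A \<alpha>"
      by (rule nat_comp[OF rep_facts(2)[OF B a] kc hc rep_facts(2)[OF X a] kc hc rep_facts(2)[OF A a] kn[OF a] hn[OF a]])
  next
    fix u show "k u * h u \<in> carrier_mat (rdim B u) (rdim A u)" using mult_carrier_mat[OF kc hc] .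
    show "\<exists>g. g \<in> carrier_mat (rdim A u) (rdim B u) \<and> g * (k u * h u) = 1\<^sub>m (rdim A u) \<and> k u * h u * g = 1\<^sub>m (rdim B u)"
      by (intro exI[of _ "h' u * k' u"] conjI mult_carrier_mat[OF hc' kc'] inv_comp[OF hc' kc' kc hc ki1 hi1]
            inv_comp[OF kc hc hc' kc' hi2 ki2])
  qed
qed

lemma sa_facts:
  assumes "selfadjoint C cj A"
  shows "is_rep C A" "rdim A (ostar C u) = rdim A u" "rmap A \<alpha> = cadj cj (rmap A (mstar C \<alpha>))"
proof -
  show "is_rep C A" using assms unfolding selfadjoint_def by blast
  have e: "A = rep_adj C cj A" using assms unfolding selfadjoint_def by blast
  have "rdim A = rdim (rep_adj C cj A)" using e by (rule arg_cong)
  hence "rdim A = (\<lambda>u. rdim A (ostar C u))" unfolding rep_adj_def by simp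
  thus "rdim A (ostar C u) = rdim A u" by (metis)
  have "rmap A = rmap (rep_adj C cj A)" using e by (rule arg_cong)
  hence "rmap A = (\<lambda>\<alpha>. cadj cj (rmap A (mstar C \<alpha>)))" unfolding rep_adj_def by simp
  thus "rmap A \<alpha> = cadj cj (rmap A (mstar C \<alpha>))" by metis
qed


lemma main_core:
  fixes cj :: "'k::division_ring \<Rightarrow> 'k" and C :: "('o, 'm, 'k) lcat"
    and A B :: "('o, 'm, 'k) rep" and S0 :: "'o set" and \<phi> :: "'o \<Rightarrow> 'k mat"
  assumes cj: "skew_involution cj" and lc: "lin_cat_inv cj C"
    and sA: "selfadjoint C cj A" and sB: "selfadjoint C cj B"
    and S0: "S0_partition C S0" and iso: "rep_iso C A B \<phi>"
  shows "\<exists>f\<in>Aut C B. mor_adj C cj f = f \<and> rep_congruent C cj A (twist C S0 B f)"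
proof -
  let ?st = "ostar C"
  have A: "is_rep C A" and B: "is_rep C B" using sa_facts(1) sA sB by blast+
  have da[simp]: "\<And>u. rdim A (?st u) = rdim A u" using sa_facts(2)[OF sA] .
  have db[simp]: "\<And>u. rdim B (?st u) = rdim B u" using sa_facts(2)[OF sB] .
  have stst[simp]: "\<And>u. ?st (?st u) = u" using lc_facts(1)[OF lc] .
  obtain \<phi>' where p'c: "\<And>u. \<phi>' u \<in> carrier_mat (rdim A u) (rdim B u)"
    and pi1: "\<And>u. \<phi>' u * \<phi> u = 1\<^sub>m (rdim A u)" and pi2: "\<And>u. \<phi> u * \<phi>' u = 1\<^sub>m (rdim B u)"
    using iso_inv_fam[OF iso] by blast
  have pc: "\<And>u. \<phi> u \<in> carrier_mat (rdim B u) (rdim A u)"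
    and pn: "\<And>u v \<alpha>. \<alpha> \<in> hom C u v \<Longrightarrow> rmap B \<alpha> * \<phi> u = \<phi> v * rmap A \<alpha>"
    using iso unfolding rep_iso_def rep_hom_def by auto
  define \<phi>o where "\<phi>o u = cadj cj (\<phi> (?st u))" for u
  define \<phi>'' where "\<phi>'' u = cadj cj (\<phi>' (?st u))" for u
  have poc: "\<And>u. \<phi>o u \<in> carrier_mat (rdim A u) (rdim B u)"
    unfolding \<phi>o_def using cadj_carrier[OF pc] da db by metis
  have p''c: "\<And>u. \<phi>'' u \<in> carrier_mat (rdim B u) (rdim A u)"
    unfolding \<phi>''_def using cadj_carrier[OF p'c] da db by metis
  have I1: "\<And>u. \<phi>o u * \<phi>'' u = 1\<^sub>m (rdim A u)"
  proof -
    fix u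
    have "\<phi>o u * \<phi>'' u = cadj cj (\<phi>' (?st u) * \<phi> (?st u))"
      unfolding \<phi>o_def \<phi>''_def by (rule cadj_mult[OF cj p'c pc, symmetric])
    thus "\<phi>o u * \<phi>'' u = 1\<^sub>m (rdim A u)" using pi1 cadj_one[OF cj] da by metis
  qed
  have I2: "\<And>u. \<phi>'' u * \<phi>o u = 1\<^sub>m (rdim B u)"
  proof -
    fix u
    have "\<phi>'' u * \<phi>o u = cadj cj (\<phi> (?st u) * \<phi>' (?st u))"
      unfolding \<phi>o_def \<phi>''_def by (rule cadj_mult[OF cj pc p'c, symmetric])
    thus "\<phi>'' u * \<phi>o u = 1\<^sub>m (rdim B u)" using pi2 cadj_one[OF cj] db by metis
  qed
  have N2: "\<And>u v \<alpha>. \<alpha> \<in> hom C u v \<Longrightarrow> rmap A \<alpha> * \<phi>o u = \<phi>o v * rmap B \<alpha>"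
  proof -
    fix u v \<alpha> assume a: "\<alpha> \<in> hom C u v"
    have a': "mstar C \<alpha> \<in> hom C (?st v) (?st u)" using lc_facts(2)[OF lc a] .
    have e: "rmap B (mstar C \<alpha>) * \<phi> (?st v) = \<phi> (?st u) * rmap A (mstar C \<alpha>)" using pn[OF a'] .
    have "\<phi>o v * rmap B \<alpha> = cadj cj (rmap B (mstar C \<alpha>) * \<phi> (?st v))"
      unfolding \<phi>o_def sa_facts(3)[OF sB, of \<alpha>] by (rule cadj_mult[OF cj rep_facts(2)[OF B a'] pc, symmetric])
    also have "\<dots> = cadj cj (\<phi> (?st u) * rmap A (mstar C \<alpha>))" using e by simp
    also have "\<dots> = rmap A \<alpha> * \<phi>o u"
      unfolding \<phi>o_def sa_facts(3)[OF sA, of \<alpha>] by (rule cadj_mult[OF cj pc rep_facts(2)[OF A a']])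
    finally show "rmap A \<alpha> * \<phi>o u = \<phi>o v * rmap B \<alpha>" by simp
  qed
  define f where "f u = \<phi> u * \<phi>o u" for u
  define finv where "finv u = \<phi>'' u * \<phi>' u" for u
  have fc: "\<And>u. f u \<in> carrier_mat (rdim B u) (rdim B u)" unfolding f_def using mult_carrier_mat[OF pc poc] .
  have finvc: "\<And>u. finv u \<in> carrier_mat (rdim B u) (rdim B u)" unfolding finv_def using mult_carrier_mat[OF p''c p'c] .
  have fi1: "\<And>u. f u * finv u = 1\<^sub>m (rdim B u)"
    unfolding f_def finv_def by (rule inv_comp[OF pc poc p''c p'c I1 pi2])
  have fi2: "\<And>u. finv u * f u = 1\<^sub>m (rdim B u)"
    unfolding f_def finv_def by (rule inv_comp[OF p''c p'c pc poc pi1 I2])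
  have fAut: "f \<in> Aut C B"
    unfolding Aut_def rep_iso_def rep_hom_def mem_Collect_eq
  proof (intro conjI allI impI)
    fix u v \<alpha> assume a: "\<alpha> \<in> hom C u v"
    show "rmap B \<alpha> * f u = f v * rmap B \<alpha>"
      unfolding f_def by (rule nat_comp[OF rep_facts(2)[OF B a] pc poc rep_facts(2)[OF A a] pc poc
          rep_facts(2)[OF B a] pn[OF a] N2[OF a]])
  next
    fix u show "f u \<in> carrier_mat (rdim B u) (rdim B u)" by (rule fc)
    show "\<exists>g. g \<in> carrier_mat (rdim B u) (rdim B u) \<and> g * f u = 1\<^sub>m (rdim B u) \<and> f u * g = 1\<^sub>m (rdim B u)"
      using finvc fi1 fi2 by blast
  qed
  have fadj: "mor_adj C cj f = f"
  proof
    fix u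
    have "mor_adj C cj f u = cadj cj (\<phi> (?st u) * \<phi>o (?st u))" unfolding mor_adj_def f_def ..
    also have "\<dots> = cadj cj (\<phi>o (?st u)) * cadj cj (\<phi> (?st u))"
      using cadj_mult[OF cj pc poc] .
    also have "\<dots> = f u" unfolding f_def \<phi>o_def by (simp add: cadj_cadj[OF cj])
    finally show "mor_adj C cj f u = f u" .
  qed
  define F where "F = ftilde S0 B f"
  define G where "G u = minv (rdim B u) (F u)" for u
  have S0': "\<And>u. (?st u \<in> S0) = (u \<notin> S0)" using S0 unfolding S0_partition_def by blast
  have Geq: "\<And>u. G u = (if u \<in> S0 then finv u else 1\<^sub>m (rdim B u))"
  proof -
    fix u
    define H where "H = (if u \<in> S0 then finv u else 1\<^sub>m (rdim B u))"
    have Fc: "F u \<in> carrier_mat (rdim B u) (rdim B u)" unfolding F_def ftilde_def using fc by simp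
    have Hc: "H \<in> carrier_mat (rdim B u) (rdim B u)" unfolding H_def using finvc by simp
    have HF: "H * F u = 1\<^sub>m (rdim B u)" and FH: "F u * H = 1\<^sub>m (rdim B u)"
      unfolding H_def F_def ftilde_def using fi1 fi2 by auto
    have "\<exists>N. N \<in> carrier_mat (rdim B u) (rdim B u) \<and> N * F u = 1\<^sub>m (rdim B u) \<and> F u * N = 1\<^sub>m (rdim B u)"
      using Hc HF FH by blast
    hence G: "G u \<in> carrier_mat (rdim B u) (rdim B u) \<and> G u * F u = 1\<^sub>m (rdim B u) \<and> F u * G u = 1\<^sub>m (rdim B u)"
      unfolding G_def minv_def by (rule someI_ex)
    have "G u = H" using inv_unique[OF _ Fc Hc _ FH] G by blast
    thus "G u = (if u \<in> S0 then finv u else 1\<^sub>m (rdim B u))" unfolding H_def .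
  qed
  have Gc: "\<And>u. G u \<in> carrier_mat (rdim B u) (rdim B u)" using Geq finvc by simp
  have FG: "\<And>u. F u * G u = 1\<^sub>m (rdim B u)" unfolding F_def ftilde_def using Geq fi1 by simp
  define \<psi> where "\<psi> u = (if u \<in> S0 then \<phi>'' u else \<phi> u)" for u
  define \<psi>o where "\<psi>o u = (if u \<in> S0 then \<phi>o u else \<phi>' u)" for u
  have psc: "\<And>u. \<psi> u \<in> carrier_mat (rdim B u) (rdim A u)" unfolding \<psi>_def using pc p''c by simp
  have psoc: "\<And>u. \<psi>o u \<in> carrier_mat (rdim A u) (rdim B u)" unfolding \<psi>o_def using poc p'c by simp
  have psi1: "\<And>u. \<psi>o u * \<psi> u = 1\<^sub>m (rdim A u)" unfolding \<psi>_def \<psi>o_def using I1 pi1 by simp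
  have psi2: "\<And>u. \<psi> u * \<psi>o u = 1\<^sub>m (rdim B u)" unfolding \<psi>_def \<psi>o_def using I2 pi2 by simp
  have Gpsi: "\<And>u. G u * \<phi> u = \<psi> u"
  proof -
    fix u
    show "G u * \<phi> u = \<psi> u"
    proof (cases "u \<in> S0")
      case True
      have "G u * \<phi> u = \<phi>'' u * (\<phi>' u * \<phi> u)" using True Geq assoc_mult_mat[OF p''c p'c pc]
        unfolding finv_def by simp
      also have "\<dots> = \<psi> u" using True pi1 right_mult_one_mat[OF p''c] unfolding \<psi>_def by simp
      finally show ?thesis .
    next
      case False
      thus ?thesis using Geq left_mult_one_mat[OF pc] unfolding \<psi>_def by simp
    qed
  qed
  have psadj: "mor_adj C cj \<psi> = \<psi>o"
  proof
    fix u
    show "mor_adj C cj \<psi> u = \<psi>o u"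
      unfolding mor_adj_def \<psi>_def \<psi>o_def \<phi>''_def \<phi>o_def using S0'[of u] by (simp add: cadj_cadj[OF cj])
  qed
  define T where "T = twist C S0 B f"
  have rT: "rdim T = rdim B" unfolding T_def twist_def by simp
  have Tmap: "\<And>u v \<alpha>. \<alpha> \<in> hom C u v \<Longrightarrow> rmap T \<alpha> = G v * rmap B \<alpha> * F u"
    unfolding T_def twist_def G_def F_def hom_def by simp
  have Fc: "\<And>u. F u \<in> carrier_mat (rdim B u) (rdim B u)" unfolding F_def ftilde_def using fc by simp
  have Tnat: "\<And>u v \<alpha>. \<alpha> \<in> hom C u v \<Longrightarrow> rmap T \<alpha> * \<psi> u = \<psi> v * rmap A \<alpha>"
  proof -
    fix u v \<alpha> assume a: "\<alpha> \<in> hom C u v"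
    have Ba: "rmap B \<alpha> \<in> carrier_mat (rdim B v) (rdim B u)" using rep_facts(2)[OF B a] .
    have Aa: "rmap A \<alpha> \<in> carrier_mat (rdim A v) (rdim A u)" using rep_facts(2)[OF A a] .
    have GB: "G v * rmap B \<alpha> \<in> carrier_mat (rdim B v) (rdim B u)" using mult_carrier_mat[OF Gc Ba] .
    have "rmap T \<alpha> * \<psi> u = (G v * rmap B \<alpha> * F u) * (G u * \<phi> u)" using Tmap[OF a] Gpsi by simp
    also have "\<dots> = (G v * rmap B \<alpha>) * (F u * (G u * \<phi> u))"
      using assoc_mult_mat[OF GB Fc mult_carrier_mat[OF Gc pc]] .
    also have "F u * (G u * \<phi> u) = \<phi> u"
      using assoc_mult_mat[OF Fc Gc pc] FG left_mult_one_mat[OF pc] by simp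
    also have "(G v * rmap B \<alpha>) * \<phi> u = G v * (\<phi> v * rmap A \<alpha>)"
      using assoc_mult_mat[OF Gc Ba pc] pn[OF a] by simp
    also have "\<dots> = \<psi> v * rmap A \<alpha>" using assoc_mult_mat[OF Gc pc Aa] Gpsi by simp
    finally show "rmap T \<alpha> * \<psi> u = \<psi> v * rmap A \<alpha>" .
  qed
  have Tconj: "\<And>u v \<alpha>. \<alpha> \<in> hom C u v \<Longrightarrow> rmap T \<alpha> = \<psi> v * rmap A \<alpha> * \<psi>o u"
  proof -
    fix u v \<alpha> assume a: "\<alpha> \<in> hom C u v"
    have Tc: "rmap T \<alpha> \<in> carrier_mat (rdim B v) (rdim B u)"
      using Tmap[OF a] mult_carrier_mat[OF mult_carrier_mat[OF Gc rep_facts(2)[OF B a]] Fc] by simp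
    show "rmap T \<alpha> = \<psi> v * rmap A \<alpha> * \<psi>o u"
      by (rule nat_solve[OF Tc rep_facts(2)[OF A a] psc psoc psc psi2 Tnat[OF a]])
  qed
  have Trep: "is_rep C T"
    by (rule conj_rep[OF lc A, where P = \<psi> and Q = \<psi>o])
       (use rep_facts(1)[OF B] psc psoc psi1 psi2 Tconj in \<open>simp_all add: rT\<close>)
  have Tadj: "T = rep_adj C cj T"
  proof (rule rep.equality)
    show "rdim T = rdim (rep_adj C cj T)" unfolding rep_adj_def by (simp add: rT)
    show "rep.more T = rep.more (rep_adj C cj T)" by simp
    show "rmap T = rmap (rep_adj C cj T)"
    proof
      fix \<alpha>
      define u where "u = Dom C \<alpha>"
      define v where "v = Cod C \<alpha>"
      have a: "\<alpha> \<in> hom C u v" unfolding u_def v_def by (rule in_hom)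
      have a': "mstar C \<alpha> \<in> hom C (?st v) (?st u)" using lc_facts(2)[OF lc a] .
      have Aa': "rmap A (mstar C \<alpha>) \<in> carrier_mat (rdim A (?st u)) (rdim A (?st v))" using rep_facts(2)[OF A a'] .
      have "rmap (rep_adj C cj T) \<alpha> = cadj cj (\<psi> (?st u) * rmap A (mstar C \<alpha>) * \<psi>o (?st v))"
        unfolding rep_adj_def using Tconj[OF a'] by simp
      also have "\<dots> = cadj cj (\<psi>o (?st v)) * (cadj cj (rmap A (mstar C \<alpha>)) * cadj cj (\<psi> (?st u)))"
        using cadj_mult[OF cj mult_carrier_mat[OF psc Aa'] psoc] cadj_mult[OF cj psc Aa'] by simp
      also have "cadj cj (\<psi> (?st u)) = \<psi>o u" using psadj unfolding mor_adj_def by metis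
      also have "cadj cj (\<psi>o (?st v)) = \<psi> v" using psadj cadj_cadj[OF cj] unfolding mor_adj_def by (metis stst)
      also have "cadj cj (rmap A (mstar C \<alpha>)) = rmap A \<alpha>" using sa_facts(3)[OF sA] by metis
      also have "\<psi> v * (rmap A \<alpha> * \<psi>o u) = rmap T \<alpha>"
        using Tconj[OF a] assoc_mult_mat[OF psc rep_facts(2)[OF A a] psoc] by simp
      finally show "rmap T \<alpha> = rmap (rep_adj C cj T) \<alpha>" by simp
    qed
  qed
  have sT: "selfadjoint C cj T" unfolding selfadjoint_def using Trep Tadj by blast
  have isoT: "rep_iso C A T \<psi>"
    unfolding rep_iso_def rep_hom_def rT
  proof (intro conjI allI impI)
    fix u v \<alpha> assume a: "\<alpha> \<in> hom C u v"
    show "rmap T \<alpha> * \<psi> u = \<psi> v * rmap A \<alpha>" by (rule Tnat[OF a])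
  next
    fix u show "\<psi> u \<in> carrier_mat (rdim B u) (rdim A u)" by (rule psc)
    show "\<exists>g. g \<in> carrier_mat (rdim A u) (rdim B u) \<and> g * \<psi> u = 1\<^sub>m (rdim A u) \<and> \<psi> u * g = 1\<^sub>m (rdim B u)"
      using psoc psi1 psi2 by blast
  qed
  have "rep_congruent C cj A T"
    unfolding rep_congruent_def
    using sA sT isoT psadj psi1 psi2 rT by auto
  thus ?thesis using fAut fadj unfolding T_def by blast
qed


theorem lemma4:
  fixes cj :: "'k::division_ring \<Rightarrow> 'k"
    and C :: "('o, 'm, 'k) lcat"
    and A :: "('o, 'm, 'k) rep"
    and S0 :: "'o set"
    and I J :: "('o, 'm, 'k) rep set"
  assumes "skew_involution cj"
    and "lin_cat_inv cj C"
    and "selfadjoint C cj A"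
    and "indecomposable C A"
    and "S0_partition C S0"
    and "is_ind0 C cj I J"
  shows "\<exists>B\<in>J. \<exists>f\<in>Aut C B. mor_adj C cj f = f \<and> rep_congruent C cj A (twist C S0 B f)"
proof -
  have cI: "complete_indec_set C I" using assms(6) unfolding is_ind0_def by blast
  obtain g where J: "J = g ` {X\<in>I. \<exists>S. selfadjoint C cj S \<and> isomorphic C X S}"
    and g: "\<forall>X\<in>I. (\<exists>S. selfadjoint C cj S \<and> isomorphic C X S) \<longrightarrow>
                  selfadjoint C cj (g X) \<and> isomorphic C X (g X)"
    using assms(6) unfolding is_ind0_def by blast
  obtain X where XI: "X \<in> I" and AX: "isomorphic C A X"
    using cI assms(4) unfolding complete_indec_set_def by blast
  have Xr: "is_rep C X" using cI XI unfolding complete_indec_set_def indecomposable_def by blast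
  have Ar: "is_rep C A" using assms(3) unfolding selfadjoint_def by blast
  obtain h where h: "rep_iso C A X h" using AX unfolding isomorphic_def by blast
  have XA: "isomorphic C X A" by (rule iso_sym[OF Ar Xr h])
  have ex: "\<exists>S. selfadjoint C cj S \<and> isomorphic C X S" using assms(3) XA by blast
  have BJ: "g X \<in> J" unfolding J using XI ex by blast
  have sB: "selfadjoint C cj (g X)" and XB: "isomorphic C X (g X)" using g XI ex by blast+
  obtain k where k: "rep_iso C X (g X) k" using XB unfolding isomorphic_def by blast
  have Br: "is_rep C (g X)" using sB unfolding selfadjoint_def by blast
  have "rep_iso C A (g X) (\<lambda>u. k u * h u)" by (rule iso_trans[OF Ar Xr Br h k])
  from main_core[OF assms(1,2,3) sB assms(5) this] BJ show ?thesis by blast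
qed

end
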